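(* For every positive integer $n$, $$b^{2}_{3,8}(2n+1)\equiv 2\,b_{2,3}(n)\pmod 3.$$
   Context: For integers $r\ge1$ write $f_r=\prod_{j\ge1}(1-q^{rj})$. For coprime positive integers $\ell,m$ and a positive integer $k$, $b^{k}_{\ell,m}(n)$ denotes the number of $k$-colored partitions of $n$ into parts not divisible by $\ell$ or by $m$, i.e. $\sum_{n\ge0} b^{k}_{\ell,m}(n)q^n=\dfrac{f_\ell^k f_m^k}{f_1^k f_{\ell m}^k}$, and $b_{\ell,m}=b^1_{\ell,m}$. Thus $\sum b^2_{3,8}(n)q^n=\dfrac{f_3^2f_8^2}{f_1^2f_{24}^2}$ and $\sum b_{2,3}(n)q^n=\dfrac{f_2f_3}{f_1f_6}$. *)

theory Defs
  imports Main "HOL-Library.Multiset" "HOL-Number_Theory.Cong"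
begin

text \<open>A k-colored partition of n is a finite multiset of pairs (part, colour),
  with colour < k, whose parts sum to n. We restrict to parts not divisible
  by l and not divisible by m.\<close>

definition colored_partitions :: "nat \<Rightarrow> nat \<Rightarrow> nat \<Rightarrow> nat \<Rightarrow> (nat \<times> nat) multiset set" where
  "colored_partitions k l m n =
     {M. (\<forall>x\<in>#M. 0 < fst x \<and> \<not> l dvd fst x \<and> \<not> m dvd fst x \<and> snd x < k)
         \<and> sum_mset (image_mset fst M) = n}"

definition b :: "nat \<Rightarrow> nat \<Rightarrow> nat \<Rightarrow> nat \<Rightarrow> nat" where
  "b k l m n = card (colored_partitions k l m n)"

end

theory Submission
  imports Defs "HOL-Computational_Algebra.Formal_Power_Series" "HOL-Library.Numeral_Type"
begin

definition eqm :: "nat \<Rightarrow> 'a::comm_ring_1 fps \<Rightarrow> 'a fps \<Rightarrow> bool" where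
  "eqm m f g \<longleftrightarrow> (\<forall>i\<le>m. (fps_nth f i) = (fps_nth g i))"

lemma eqm_refl[simp]: "eqm m f f" by (simp add: eqm_def)
lemma eqm_sym: "eqm m f g \<Longrightarrow> eqm m g f" by (simp add: eqm_def)
lemma eqm_trans: "eqm m f g \<Longrightarrow> eqm m g h \<Longrightarrow> eqm m f h" by (simp add: eqm_def)
lemma eqm_mono: "eqm m f g \<Longrightarrow> m' \<le> m \<Longrightarrow> eqm m' f g" by (simp add: eqm_def)
lemma eqm_add: "eqm m f g \<Longrightarrow> eqm m f' g' \<Longrightarrow> eqm m (f + f') (g + g')"
  by (simp add: eqm_def)
lemma eqm_diff: "eqm m f g \<Longrightarrow> eqm m f' g' \<Longrightarrow> eqm m (f - f') (g - g')"
  by (simp add: eqm_def)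
lemma eqm_mult: "eqm m f g \<Longrightarrow> eqm m f' g' \<Longrightarrow> eqm m (f * f') (g * g')"
  unfolding eqm_def fps_mult_nth by (auto intro!: sum.cong)
lemma eqm_power: "eqm m f g \<Longrightarrow> eqm m (f ^ k) (g ^ k)"
  by (induction k) (auto intro: eqm_mult)
lemma eqm_prod: "(\<And>j. j \<in> A \<Longrightarrow> eqm m (f j) (g j)) \<Longrightarrow> eqm m (prod f A) (prod g A)"
  by (induction A rule: infinite_finite_induct) (auto intro: eqm_mult)
lemma eqm_sum: "(\<And>j. j \<in> A \<Longrightarrow> eqm m (f j) (g j)) \<Longrightarrow> eqm m (sum f A) (sum g A)"
  by (induction A rule: infinite_finite_induct) (auto intro: eqm_add)
lemma eqm_all: "(\<And>m. eqm m f g) \<Longrightarrow> f = g"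
  by (auto simp: eqm_def fps_eq_iff)

lemma eqm_X_power_0: "m < k \<Longrightarrow> eqm m (fps_X ^ k * f) 0"
  by (simp add: eqm_def fps_X_power_mult_nth)

lemma eqm_cancel_zero:
  fixes f g :: "'a::comm_ring_1 fps"
  assumes f0: "(fps_nth f 0) = 1" and h: "eqm m (f * g) 0"
  shows "eqm m g 0"
proof -
  have "(fps_nth g i) = 0" if "i \<le> m" for i
    using that
  proof (induction i rule: less_induct)
    case (less i)
    have "(fps_nth (f * g) i) = 0" using h less.prems by (simp add: eqm_def)
    moreover have "(fps_nth (f * g) i) = (\<Sum>j=0..i. (fps_nth f j) * (fps_nth g (i-j)))" by (simp add: fps_mult_nth)
    moreover have "(\<Sum>j=0..i. (fps_nth f j) * (fps_nth g (i-j))) = (fps_nth f 0) * (fps_nth g i) + (\<Sum>j=1..i. (fps_nth f j) * (fps_nth g (i-j)))"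
      by (simp add: sum.atLeast_Suc_atMost)
    moreover have "(\<Sum>j=1..i. (fps_nth f j) * (fps_nth g (i-j))) = 0"
      using less by (intro sum.neutral) auto
    ultimately show ?case using f0 by simp
  qed
  then show ?thesis by (simp add: eqm_def)
qed

lemma eqm_cancel:
  fixes f g h :: "'a::comm_ring_1 fps"
  assumes f0: "(fps_nth f 0) = 1" and h: "eqm m (f * g) (f * h)"
  shows "eqm m g h"
proof -
  have "eqm m (f * (g - h)) 0" using h by (simp add: eqm_def algebra_simps)
  then have "eqm m (g - h) 0" using f0 eqm_cancel_zero by blast
  then show ?thesis by (simp add: eqm_def)
qed

lemma cancel_fps:
  fixes f g h :: "'a::comm_ring_1 fps"
  assumes f0: "(fps_nth f 0) = 1" and h: "f * g = f * h"
  shows "g = h"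
  using eqm_cancel[OF f0] h by (metis eqm_all eqm_refl)

lemma eqm_prod_subset:
  fixes u :: "nat \<Rightarrow> 'a::comm_ring_1 fps"
  assumes "finite A" "B \<subseteq> A" "\<And>j. j \<in> A - B \<Longrightarrow> eqm m (u j) 1"
  shows "eqm m (prod u A) (prod u B)"
proof -
  have "prod u A = prod u B * prod u (A - B)"
    using assms by (simp add: prod.subset_diff[of B A] mult.commute)
  moreover have "eqm m (prod u (A - B)) (prod (\<lambda>_. 1) (A - B))"
    using assms(3) by (intro eqm_prod) auto
  ultimately show ?thesis using eqm_mult[OF eqm_refl[of m "prod u B"]] by force
qed

definition good :: "(nat \<Rightarrow> 'a::comm_ring_1 fps) \<Rightarrow> bool" where
  "good u \<longleftrightarrow> (\<forall>j\<ge>1. \<forall>i<j. fps_nth (u j) i = fps_nth (1::'a fps) i)"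

definition plim :: "(nat \<Rightarrow> 'a::comm_ring_1 fps) \<Rightarrow> 'a fps" where
  "plim u = Abs_fps (\<lambda>i. (fps_nth (\<Prod>j\<in>{1..i}. u j) i))"

lemma plim_eqm:
  fixes u :: "nat \<Rightarrow> 'a::comm_ring_1 fps"
  assumes g: "good u" and big: "\<And>j. j > M \<Longrightarrow> eqm m (u j) 1"
  shows "eqm m (\<Prod>j\<in>{1..M}. u j) (plim u)"
  unfolding eqm_def
proof (intro allI impI)
  fix i assume im: "i \<le> m"
  define K where "K = max M i"
  have 1: "eqm i (\<Prod>j\<in>{1..K}. u j) (\<Prod>j\<in>{1..M}. u j)"
    by (rule eqm_prod_subset) (auto simp: K_def intro: eqm_mono[OF big im])
  have 2: "eqm i (\<Prod>j\<in>{1..K}. u j) (\<Prod>j\<in>{1..i}. u j)"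
    by (rule eqm_prod_subset) (use g in \<open>auto simp: K_def good_def eqm_def\<close>)
  show "(fps_nth (\<Prod>j\<in>{1..M}. u j) i) = fps_nth (plim u) i"
    using 1 2 by (simp add: eqm_def plim_def)
qed

lemma plim_eqm':
  fixes u :: "nat \<Rightarrow> 'a::comm_ring_1 fps"
  assumes g: "good u" and "M \<ge> m"
  shows "eqm m (\<Prod>j\<in>{1..M}. u j) (plim u)"
proof (rule plim_eqm[OF g])
  fix j assume "M < j"
  then show "eqm m (u j) 1" using g assms(2) by (auto simp: good_def eqm_def)
qed

abbreviation X :: "'a::comm_ring_1 fps" where "X \<equiv> fps_X"

lemma good_minus:
  assumes h: "\<And>j. j \<ge> 1 \<Longrightarrow> e j \<ge> j"
  shows "good (\<lambda>j. (1::'a::comm_ring_1 fps) - X ^ e j)"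
  unfolding good_def
proof (intro allI impI)
  fix j i assume j: "(1::nat) \<le> j" "i < j"
  then have "i \<noteq> e j" using h[OF j(1)] by auto
  then show "fps_nth (1 - X ^ e j) i = fps_nth (1::'a fps) i" by (simp add: fps_sub_nth fps_add_nth)
qed
lemma good_plus:
  assumes h: "\<And>j. j \<ge> 1 \<Longrightarrow> e j \<ge> j"
  shows "good (\<lambda>j. (1::'a::comm_ring_1 fps) + X ^ e j)"
  unfolding good_def
proof (intro allI impI)
  fix j i assume j: "(1::nat) \<le> j" "i < j"
  then have "i \<noteq> e j" using h[OF j(1)] by auto
  then show "fps_nth (1 + X ^ e j) i = fps_nth (1::'a fps) i" by (simp add: fps_sub_nth fps_add_nth)
qed

definition F :: "nat \<Rightarrow> 'a::comm_ring_1 fps" where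
  "F r = plim (\<lambda>j. 1 - X ^ (r * j))"
definition Lo :: "'a::comm_ring_1 fps" where "Lo = plim (\<lambda>j. 1 - X ^ (2 * j - 1))"
definition Ho :: "'a::comm_ring_1 fps" where "Ho = plim (\<lambda>j. 1 + X ^ (2 * j - 1))"
definition He :: "'a::comm_ring_1 fps" where "He = plim (\<lambda>j. 1 + X ^ (2 * j))"

lemma F_approx: "r \<ge> 1 \<Longrightarrow> N \<ge> m \<Longrightarrow> eqm m (\<Prod>j\<in>{1..N}. 1 - X ^ (r * j)) (F r)"
  unfolding F_def by (rule plim_eqm') (auto intro!: good_minus)
lemma F_approx2:
  assumes "r \<ge> 1" "\<And>j. j > N \<Longrightarrow> r * j > m"
  shows "eqm m (\<Prod>j\<in>{1..N}. 1 - X ^ (r * j)) (F r)"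
  unfolding F_def
proof (rule plim_eqm)
  show "good (\<lambda>j. (1::'a fps) - X ^ (r * j))" using \<open>r \<ge> 1\<close> by (auto intro!: good_minus)
  fix j assume "j > N"
  then have "r * j > m" by fact
  then show "eqm m (1 - X ^ (r * j)) (1::'a fps)" by (simp add: eqm_def)
qed
lemma Lo_approx: "N \<ge> m \<Longrightarrow> eqm m (\<Prod>j\<in>{1..N}. 1 - X ^ (2 * j - 1)) Lo"
  unfolding Lo_def by (rule plim_eqm') (auto intro!: good_minus)
lemma Ho_approx: "N \<ge> m \<Longrightarrow> eqm m (\<Prod>j\<in>{1..N}. 1 + X ^ (2 * j - 1)) Ho"
  unfolding Ho_def by (rule plim_eqm') (auto intro!: good_plus)
lemma He_approx: "N \<ge> m \<Longrightarrow> eqm m (\<Prod>j\<in>{1..N}. 1 + X ^ (2 * j)) He"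
  unfolding He_def by (rule plim_eqm') (auto intro!: good_plus)

lemma F_0: "r \<ge> 1 \<Longrightarrow> fps_nth (F r :: 'a::comm_ring_1 fps) 0 = 1"
  using F_approx[of r 0 0] by (simp add: eqm_def)

definition sub2 :: "int fps \<Rightarrow> int fps" where "sub2 f = f oo X ^ 2"

lemma sub2_nth: "fps_nth (sub2 f) n = (if even n then fps_nth f (n div 2) else 0)"
proof -
  have "fps_nth (sub2 f) n = (\<Sum>i=0..n. fps_nth f i * (if n = 2 * i then 1 else 0))"
    unfolding sub2_def fps_compose_nth by (simp add: power_mult[symmetric])
  also have "\<dots> = (\<Sum>i\<in>{0..n} \<inter> {i. n = 2 * i}. fps_nth f i)"
    by (simp add: sum.inter_restrict if_distrib[of "\<lambda>x. _ * x"] cong: if_cong)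
  also have "\<dots> = (if even n then fps_nth f (n div 2) else 0)"
  proof (cases "even n")
    case True
    then have "{0..n} \<inter> {i. n = 2 * i} = {n div 2}" by auto
    then show ?thesis using True by simp
  next
    case False
    then have "{0..n} \<inter> {i. n = 2 * i} = {}" by auto
    then show ?thesis using False by simp
  qed
  finally show ?thesis .
qed


lemma X2_0: "fps_nth ((X::int fps) ^ 2) 0 = 0" by simp
lemma sub2_mult: "sub2 (f * g) = sub2 f * sub2 g"
  unfolding sub2_def by (rule fps_compose_mult_distrib) simp
lemma sub2_add: "sub2 (f + g) = sub2 f + sub2 g"
  unfolding sub2_def by (rule fps_compose_add_distrib)
lemma sub2_diff: "sub2 (f - g) = sub2 f - sub2 g"
  unfolding sub2_def by (rule fps_compose_sub_distrib)
lemma sub2_0: "sub2 0 = 0" unfolding sub2_def by simp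
lemma sub2_1: "sub2 1 = 1" unfolding sub2_def by simp
lemma sub2_power: "sub2 (f ^ k) = sub2 f ^ k"
  by (induction k) (simp_all add: sub2_1 sub2_mult)
lemma sub2_prod: "sub2 (prod f A) = prod (\<lambda>j. sub2 (f j)) A"
  by (induction A rule: infinite_finite_induct) (simp_all add: sub2_1 sub2_mult)
lemma sub2_sum: "sub2 (sum f A) = sum (\<lambda>j. sub2 (f j)) A"
  by (induction A rule: infinite_finite_induct) (simp_all add: sub2_add sub2_0)
lemma sub2_X: "sub2 X = X ^ 2" unfolding sub2_def by simp
lemma sub2_Xp: "sub2 (X ^ k) = X ^ (2 * k)" by (simp add: sub2_power sub2_X power_mult)
lemma sub2_numeral: "sub2 (numeral n) = numeral n"
  unfolding sub2_def by (metis fps_const_compose fps_numeral_fps_const)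
lemma sub2_const: "sub2 (fps_const c) = fps_const c"
  unfolding sub2_def by simp
lemma sub2_neg: "sub2 (- f) = - sub2 f"
  using sub2_diff[of 0 f] by (simp add: sub2_def)

lemma sub2_eqm: "eqm m f g \<Longrightarrow> eqm (2 * m + 1) (sub2 f) (sub2 g)"
  unfolding eqm_def sub2_nth by auto

lemma sub2_F: "r \<ge> 1 \<Longrightarrow> sub2 (F r) = F (2 * r)"
proof (rule eqm_all)
  fix m assume r: "r \<ge> 1"
  have "eqm m (\<Prod>j\<in>{1..m}. 1 - X ^ (r * j)) (F r)" using F_approx[OF r, of m m] by simp
  then have "eqm (2*m+1) (sub2 (\<Prod>j\<in>{1..m}. 1 - X ^ (r * j))) (sub2 (F r))" by (rule sub2_eqm)
  moreover have "sub2 (\<Prod>j\<in>{1..m}. 1 - X ^ (r * j)) = (\<Prod>j\<in>{1..m}. 1 - X ^ (2 * r * j))"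
    by (simp add: sub2_prod sub2_diff sub2_1 sub2_Xp mult.assoc)
  ultimately have 1: "eqm m (\<Prod>j\<in>{1..m}. 1 - X ^ (2 * r * j)) (sub2 (F r))"
    using eqm_mono by fastforce
  have 2: "eqm m (\<Prod>j\<in>{1..m}. 1 - X ^ (2 * r * j)) (F (2 * r))" using F_approx[of "2*r" m m] r by simp
  show "eqm m (sub2 (F r)) (F (2 * r))" using 1 2 eqm_sym eqm_trans by blast
qed

definition ev :: "int fps \<Rightarrow> int fps" where "ev f = Abs_fps (\<lambda>n. fps_nth f (2 * n))"
definition od :: "int fps \<Rightarrow> int fps" where "od f = Abs_fps (\<lambda>n. fps_nth f (2 * n + 1))"

lemma X_mult_nth: "fps_nth (X * f) n = (if n = 0 then 0 else fps_nth f (n - 1))"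
  using fps_X_power_mult_nth[of 1 f n] by simp

lemma ev_od: "f = sub2 (ev f) + X * sub2 (od f)"
  by (auto simp: fps_eq_iff X_mult_nth sub2_nth ev_def od_def elim!: oddE)

lemma odd_coeff: "fps_nth (sub2 u + X * sub2 v) (2 * n + 1) = fps_nth v n"
  by (simp add: X_mult_nth sub2_nth)

definition M3 :: "int fps \<Rightarrow> 3 fps" where "M3 f = Abs_fps (\<lambda>n. of_int (fps_nth f n))"

lemma M3_nth: "fps_nth (M3 f) n = of_int (fps_nth f n)" by (simp add: M3_def)
lemma M3_add: "M3 (f + g) = M3 f + M3 g" by (simp add: fps_eq_iff M3_nth)
lemma M3_diff: "M3 (f - g) = M3 f - M3 g" by (simp add: fps_eq_iff M3_nth)
lemma M3_neg: "M3 (- f) = - M3 f" by (simp add: fps_eq_iff M3_nth)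
lemma M3_mult: "M3 (f * g) = M3 f * M3 g" by (simp add: fps_eq_iff M3_nth fps_mult_nth)
lemma M3_1: "M3 1 = 1" by (simp add: fps_eq_iff M3_nth)
lemma M3_X: "M3 X = X" by (simp add: fps_eq_iff M3_nth)
lemma M3_numeral: "M3 (numeral k) = numeral k"
  by (simp add: fps_eq_iff M3_nth numeral_fps_const)
lemma M3_power: "M3 (f ^ k) = M3 f ^ k" by (induction k) (simp_all add: M3_1 M3_mult)
lemma M3_prod: "M3 (prod f A) = prod (\<lambda>j. M3 (f j)) A"
  by (induction A rule: infinite_finite_induct) (simp_all add: M3_1 M3_mult)
lemma M3_eqm: "eqm m f g \<Longrightarrow> eqm m (M3 f) (M3 g)" by (simp add: eqm_def M3_nth)

lemma M3_F0: "r \<ge> 1 \<Longrightarrow> fps_nth (M3 (F r)) 0 = 1" by (simp add: M3_nth F_0)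

lemma three_fps: "(3::3 fps) = 0"
  by (simp add: numeral_fps_const)

lemma frob1: "((1::3 fps) - X ^ k) ^ 3 = 1 - X ^ (3 * k)"
proof -
  have e: "(1 - y) ^ 3 = 1 - y ^ 3 - 3 * (y - y ^ 2)" for y :: "int fps" by algebra
  have p: "(X ^ k) ^ 3 = (X::int fps) ^ (3 * k)" "(X ^ k) ^ 2 = (X::int fps) ^ (2 * k)"
    by (metis power_mult mult.commute)+
  have "((1::int fps) - X ^ k) ^ 3 = 1 - X ^ (3 * k) - 3 * (X ^ k - X ^ (2 * k))"
    using e[of "X ^ k"] p by simp
  then have "M3 (((1::int fps) - X ^ k) ^ 3) = M3 (1 - X ^ (3 * k) - 3 * (X ^ k - X ^ (2 * k)))"
    by simp
  then show ?thesis by (simp add: M3_power M3_diff M3_1 M3_X M3_mult M3_numeral three_fps)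
qed

lemma frob_F: "r \<ge> 1 \<Longrightarrow> M3 (F r) ^ 3 = M3 (F (3 * r))"
proof (rule eqm_all)
  fix m assume r: "r \<ge> 1"
  have "eqm m (M3 (\<Prod>j\<in>{1..m}. 1 - X ^ (r * j))) (M3 (F r))" using F_approx[OF r] M3_eqm by blast
  then have 1: "eqm m (M3 (\<Prod>j\<in>{1..m}. 1 - X ^ (r * j)) ^ 3) (M3 (F r) ^ 3)" by (rule eqm_power)
  have "M3 (\<Prod>j\<in>{1..m}. 1 - X ^ (r * j)) ^ 3 = (\<Prod>j\<in>{1..m}. ((1::3 fps) - X ^ (r * j)) ^ 3)"
    by (simp add: M3_prod M3_diff M3_1 M3_power M3_X prod_power_distrib)
  also have "\<dots> = M3 (\<Prod>j\<in>{1..m}. 1 - X ^ (3 * r * j))"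
    by (simp add: M3_prod M3_diff M3_1 M3_power M3_X frob1 mult.assoc)
  finally have 2: "M3 (\<Prod>j\<in>{1..m}. 1 - X ^ (r * j)) ^ 3 = M3 (\<Prod>j\<in>{1..m}. 1 - X ^ (3 * r * j))" .
  have 3: "eqm m (M3 (\<Prod>j\<in>{1..m}. 1 - X ^ (3 * r * j))) (M3 (F (3 * r)))"
    using F_approx[of "3*r" m m] r M3_eqm by auto
  show "eqm m (M3 (F r) ^ 3) (M3 (F (3 * r)))" using 1 2 3 eqm_sym eqm_trans by metis
qed

definition wt :: "(nat \<times> nat) multiset \<Rightarrow> nat" where "wt M = sum_mset (image_mset fst M)"
definition PS :: "(nat \<times> nat) set \<Rightarrow> nat \<Rightarrow> (nat \<times> nat) multiset set" where
  "PS S n = {M. set_mset M \<subseteq> S \<and> wt M = n}"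
definition cnt :: "(nat \<times> nat) set \<Rightarrow> nat \<Rightarrow> nat" where "cnt S n = card (PS S n)"
definition gf :: "(nat \<times> nat) set \<Rightarrow> int fps" where "gf S = Abs_fps (\<lambda>n. of_nat (cnt S n))"

lemma wt_empty[simp]: "wt {#} = 0" by (simp add: wt_def)
lemma wt_add[simp]: "wt (add_mset x M) = fst x + wt M" by (simp add: wt_def)

lemma size_le_wt: "\<forall>x\<in>#M. fst x > 0 \<Longrightarrow> size M \<le> wt M"
  by (induction M) auto

lemma fst_le_wt: "x \<in># M \<Longrightarrow> fst x \<le> wt M"
  by (metis le_add1 multi_member_split wt_add)

lemma finite_PS:
  assumes "finite S" "\<forall>a\<in>S. fst a > 0"
  shows "finite (PS S n)"
proof -
  have "PS S n \<subseteq> (\<Union>s\<in>{..n}. multisets_of_size S s)"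
  proof
    fix M assume "M \<in> PS S n"
    then have "set_mset M \<subseteq> S" "wt M = n" by (auto simp: PS_def)
    moreover have "size M \<le> wt M" using assms(2) \<open>set_mset M \<subseteq> S\<close> by (intro size_le_wt) auto
    ultimately show "M \<in> (\<Union>s\<in>{..n}. multisets_of_size S s)"
      by (auto simp: multisets_of_size_def)
  qed
  moreover have "finite (\<Union>s\<in>{..n}. multisets_of_size S s)" using assms(1) by auto
  ultimately show ?thesis by (rule finite_subset)
qed

lemma PS_empty: "PS {} n = (if n = 0 then {{#}} else {})"
  by (auto simp: PS_def)

lemma gf_empty: "gf {} = 1"
  by (auto simp: fps_eq_iff gf_def cnt_def PS_empty)

lemma PS_insert:
  assumes "a \<notin> S"
  shows "PS (insert a S) n = PS S n \<union> (if fst a \<le> n then add_mset a ` PS (insert a S) (n - fst a) else {})"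
    (is "?L = ?R")
proof
  show "?L \<subseteq> ?R"
  proof
    fix M assume M: "M \<in> ?L"
    show "M \<in> ?R"
    proof (cases "a \<in># M")
      case True
      then obtain M' where M': "M = add_mset a M'" by (metis multi_member_split)
      then have "fst a \<le> n" "wt M' = n - fst a" "set_mset M' \<subseteq> insert a S"
        using M by (auto simp: PS_def)
      then show ?thesis using M' by (auto simp: PS_def)
    next
      case False
      then have "set_mset M \<subseteq> S" using M by (auto simp: PS_def)
      then show ?thesis using M by (auto simp: PS_def)
    qed
  qed
next
  show "?R \<subseteq> ?L" by (auto simp: PS_def split: if_splits)
qed

lemma cnt_insert:
  assumes "a \<notin> S" "finite S" "\<forall>x\<in>insert a S. fst x > 0"
  shows "cnt (insert a S) n = cnt S n + (if fst a \<le> n then cnt (insert a S) (n - fst a) else 0)"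
proof -
  have fin1: "finite (PS S n)" using assms by (intro finite_PS) auto
  have fin2: "finite (PS (insert a S) (n - fst a))" using assms by (intro finite_PS) auto
  have disj: "PS S n \<inter> add_mset a ` PS (insert a S) (n - fst a) = {}"
  proof (rule equals0I)
    fix M assume M: "M \<in> PS S n \<inter> add_mset a ` PS (insert a S) (n - fst a)"
    then obtain M' where "M = add_mset a M'" by blast
    then have "a \<in> set_mset M" by simp
    moreover have "set_mset M \<subseteq> S" using M by (simp add: PS_def)
    ultimately show False using assms(1) by blast
  qed
  have inj: "inj_on (add_mset a) X" for X by (auto simp: inj_on_def)
  have "card (PS (insert a S) n) = card (PS S n) + (if fst a \<le> n then card (PS (insert a S) (n - fst a)) else 0)"
  proof (cases "fst a \<le> n")
    case True
    have "card (PS (insert a S) n) = card (PS S n \<union> add_mset a ` PS (insert a S) (n - fst a))"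
      using PS_insert[OF assms(1), of n] True by simp
    also have "\<dots> = card (PS S n) + card (add_mset a ` PS (insert a S) (n - fst a))"
      using fin1 fin2 disj by (intro card_Un_disjoint) auto
    also have "card (add_mset a ` PS (insert a S) (n - fst a)) = card (PS (insert a S) (n - fst a))"
      by (rule card_image[OF inj])
    finally show ?thesis using True by simp
  next
    case False
    then show ?thesis using PS_insert[OF assms(1), of n] by simp
  qed
  then show ?thesis unfolding cnt_def .
qed

lemma gf_insert:
  assumes "a \<notin> S" "finite S" "\<forall>x\<in>insert a S. fst x > 0"
  shows "gf (insert a S) * (1 - X ^ fst a) = gf S"
proof -
  have "gf (insert a S) = gf S + X ^ fst a * gf (insert a S)"
  proof (rule fps_ext)
    fix n
    show "fps_nth (gf (insert a S)) n = fps_nth (gf S + X ^ fst a * gf (insert a S)) n"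
      unfolding gf_def fps_add_nth fps_X_power_mult_nth fps_nth_Abs_fps
      by (subst cnt_insert[OF assms]) auto
  qed
  then show ?thesis by (simp add: algebra_simps)
qed

lemma gf_prod:
  assumes "finite S" "\<forall>x\<in>S. fst x > 0"
  shows "gf S * (\<Prod>a\<in>S. 1 - X ^ fst a) = 1"
  using assms
proof (induction S rule: finite_induct)
  case empty
  then show ?case by (simp add: gf_empty)
next
  case (insert a S)
  have "gf (insert a S) * (\<Prod>a\<in>insert a S. 1 - X ^ fst a) =
        (gf (insert a S) * (1 - X ^ fst a)) * (\<Prod>a\<in>S. 1 - X ^ fst a)"
    using insert by (simp add: algebra_simps)
  also have "\<dots> = gf S * (\<Prod>a\<in>S. 1 - X ^ fst a)"
    using insert by (simp add: gf_insert)
  also have "\<dots> = 1" using insert by simp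
  finally show ?case .
qed

definition AS :: "nat \<Rightarrow> nat \<Rightarrow> nat \<Rightarrow> nat set" where
  "AS l m N = {p\<in>{1..N}. \<not> l dvd p \<and> \<not> m dvd p}"
definition SN :: "nat \<Rightarrow> nat \<Rightarrow> nat \<Rightarrow> nat \<Rightarrow> (nat \<times> nat) set" where
  "SN k l m N = AS l m N \<times> {..<k}"

lemma cp_eq_PS:
  assumes "N \<ge> n"
  shows "colored_partitions k l m n = PS (SN k l m N) n"
proof
  show "colored_partitions k l m n \<subseteq> PS (SN k l m N) n"
  proof
    fix M assume M: "M \<in> colored_partitions k l m n"
    have "x \<in> SN k l m N" if "x \<in># M" for x
    proof -
      have "fst x \<le> wt M" using that by (rule fst_le_wt)
      then show ?thesis using M that assms
        by (cases x) (auto simp: colored_partitions_def SN_def AS_def wt_def)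
    qed
    then show "M \<in> PS (SN k l m N) n" using M by (auto simp: PS_def colored_partitions_def wt_def)
  qed
next
  show "PS (SN k l m N) n \<subseteq> colored_partitions k l m n"
    by (auto simp: PS_def colored_partitions_def SN_def AS_def wt_def)
qed

definition BB :: "nat \<Rightarrow> nat \<Rightarrow> nat \<Rightarrow> int fps" where
  "BB k l m = Abs_fps (\<lambda>n. of_nat (b k l m n))"

lemma BB_approx: "eqm N (BB k l m * (\<Prod>p\<in>AS l m N. 1 - X ^ p) ^ k) 1"
proof -
  have fin: "finite (SN k l m N)" by (simp add: SN_def AS_def)
  have pos: "\<forall>x\<in>SN k l m N. fst x > 0" by (auto simp: SN_def AS_def)
  have 1: "eqm N (BB k l m) (gf (SN k l m N))"
    by (auto simp: eqm_def BB_def gf_def b_def cnt_def cp_eq_PS)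
  have "(\<Prod>a\<in>SN k l m N. (1::int fps) - X ^ fst a) = (\<Prod>(p,c)\<in>AS l m N \<times> {..<k}. 1 - X ^ p)"
    unfolding SN_def by (simp add: case_prod_beta)
  also have "\<dots> = (\<Prod>p\<in>AS l m N. \<Prod>c\<in>{..<k}. 1 - X ^ p)"
    by (rule prod.cartesian_product[symmetric])
  also have "\<dots> = (\<Prod>p\<in>AS l m N. 1 - X ^ p) ^ k"
    by (simp add: prod_power_distrib)
  finally have 2: "(\<Prod>a\<in>SN k l m N. (1::int fps) - X ^ fst a) = (\<Prod>p\<in>AS l m N. 1 - X ^ p) ^ k" .
  have "eqm N (BB k l m * (\<Prod>p\<in>AS l m N. 1 - X ^ p) ^ k) (gf (SN k l m N) * (\<Prod>p\<in>AS l m N. 1 - X ^ p) ^ k)"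
    using 1 by (intro eqm_mult) auto
  then show ?thesis using gf_prod[OF fin pos] 2 by simp
qed

definition DS :: "nat \<Rightarrow> nat \<Rightarrow> nat set" where "DS r N = {p\<in>{1..N}. r dvd p}"

lemma DS_prod:
  assumes "r \<ge> 1"
  shows "eqm N (\<Prod>p\<in>DS r N. (1::int fps) - X ^ p) (F r)"
proof -
  have "DS r N = (\<lambda>j. r * j) ` {1..N div r}"
  proof
    show "DS r N \<subseteq> (\<lambda>j. r * j) ` {1..N div r}"
    proof
      fix p assume "p \<in> DS r N"
      then obtain j where j: "p = r * j" "1 \<le> p" "p \<le> N" by (auto simp: DS_def)
      then have "j \<ge> 1" by (cases j) auto
      moreover have "j \<le> N div r" using j assms
        using less_eq_div_iff_mult_less_eq[of r j N] by (simp add: mult.commute)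
      ultimately show "p \<in> (\<lambda>j. r * j) ` {1..N div r}" using j by auto
    qed
  next
    show "(\<lambda>j. r * j) ` {1..N div r} \<subseteq> DS r N"
    proof
      fix p assume "p \<in> (\<lambda>j. r * j) ` {1..N div r}"
      then obtain j where j0: "j \<in> {1..N div r}" "p = r * j" by (rule imageE)
      then have j: "p = r * j" "1 \<le> j" "j \<le> N div r" by auto
      then have "r * j \<le> N"
        using less_eq_div_iff_mult_less_eq[of r j N] assms by (simp add: mult.commute)
      then show "p \<in> DS r N" using j assms by (auto simp: DS_def)
    qed
  qed
  moreover have "inj_on (\<lambda>j. r * j) {1..N div r}" using assms by (auto simp: inj_on_def)
  ultimately have "(\<Prod>p\<in>DS r N. (1::int fps) - X ^ p) = (\<Prod>j\<in>{1..N div r}. 1 - X ^ (r * j))"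
    by (simp add: prod.reindex)
  moreover have "eqm N (\<Prod>j\<in>{1..N div r}. (1::int fps) - X ^ (r * j)) (F r)"
  proof (rule F_approx2[OF assms])
    fix j assume "N div r < j"
    then show "N < r * j" using assms
      using div_less_iff_less_mult[of r N j] by (simp add: mult.commute)
  qed
  ultimately show ?thesis by simp
qed

lemma AS_split:
  assumes "coprime l m"
  shows "(\<Prod>p\<in>AS l m N. (1::int fps) - X ^ p) * (\<Prod>p\<in>DS l N. 1 - X ^ p) * (\<Prod>p\<in>DS m N. 1 - X ^ p)
       = (\<Prod>p\<in>DS 1 N. 1 - X ^ p) * (\<Prod>p\<in>DS (l * m) N. 1 - X ^ p)"
proof -
  let ?f = "\<lambda>p. (1::int fps) - X ^ p"
  have u: "DS 1 N = AS l m N \<union> (DS l N \<union> DS m N)" by (auto simp: DS_def AS_def)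
  have d: "AS l m N \<inter> (DS l N \<union> DS m N) = {}" by (auto simp: DS_def AS_def)
  have i: "DS l N \<inter> DS m N = DS (l * m) N"
    using assms by (auto simp: DS_def divides_mult intro: dvd_mult_left dvd_mult_right)
  have "prod ?f (DS 1 N) = prod ?f (AS l m N) * prod ?f (DS l N \<union> DS m N)"
    unfolding u by (rule prod.union_disjoint) (auto simp: AS_def DS_def d)
  moreover have "prod ?f (DS l N \<union> DS m N) * prod ?f (DS l N \<inter> DS m N) = prod ?f (DS l N) * prod ?f (DS m N)"
    by (rule prod.union_inter) (auto simp: DS_def)
  ultimately show ?thesis unfolding i by (simp add: algebra_simps)
qed

theorem BB_identity:
  assumes "l \<ge> 1" "m \<ge> 1" "coprime l m"
  shows "BB k l m * F 1 ^ k * F (l * m) ^ k = F l ^ k * F m ^ k"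
proof (rule eqm_all)
  fix N
  let ?A = "\<Prod>p\<in>AS l m N. (1::int fps) - X ^ p"
  let ?P = "\<lambda>r. \<Prod>p\<in>DS r N. (1::int fps) - X ^ p"
  have lm: "l * m \<ge> 1" using assms by simp
  have e: "?A * ?P l * ?P m = ?P 1 * ?P (l * m)" using AS_split[OF assms(3)] .
  have "eqm N (BB k l m * F 1 ^ k * F (l * m) ^ k) (BB k l m * ?P 1 ^ k * ?P (l * m) ^ k)"
    using DS_prod[of 1 N] DS_prod[OF lm, of N]
    by (intro eqm_mult eqm_power eqm_refl) (auto intro: eqm_sym)
  also have "BB k l m * ?P 1 ^ k * ?P (l * m) ^ k = BB k l m * (?P 1 * ?P (l * m)) ^ k"
    by (simp add: power_mult_distrib mult.assoc)
  also have "\<dots> = BB k l m * (?A * ?P l * ?P m) ^ k" by (simp only: e)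
  also have "\<dots> = (BB k l m * ?A ^ k) * (?P l ^ k * ?P m ^ k)"
    by (simp add: power_mult_distrib mult_ac)
  finally have 1: "eqm N (BB k l m * F 1 ^ k * F (l * m) ^ k) ((BB k l m * ?A ^ k) * (?P l ^ k * ?P m ^ k))" .
  have 2: "eqm N ((BB k l m * ?A ^ k) * (?P l ^ k * ?P m ^ k)) (1 * (F l ^ k * F m ^ k))"
    using BB_approx DS_prod[OF assms(1)] DS_prod[OF assms(2)]
    by (intro eqm_mult eqm_power) auto
  show "eqm N (BB k l m * F 1 ^ k * F (l * m) ^ k) (F l ^ k * F m ^ k)"
    using eqm_trans[OF 1 2] by simp
qed

fun G :: "nat \<Rightarrow> int \<Rightarrow> int fps" where
  "G 0 k = (if k = 0 then 1 else 0)"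
| "G (Suc N) k = G N (k - 1) + X ^ (2 * nat k) * G N k"

lemma G_out: "k < 0 \<or> k > int N \<Longrightarrow> G N k = 0"
  by (induction N arbitrary: k) auto

lemma G_nz: "G N k \<noteq> 0 \<Longrightarrow> 0 \<le> k \<and> k \<le> int N"
  using G_out by force

lemma G_P2: "G (Suc N) k = X ^ (2 * nat (int N + 1 - k)) * G N (k - 1) + G N k"
proof (induction N arbitrary: k)
  case 0
  then show ?case by (cases "k = 0"; cases "k = 1") auto
next
  case (Suc N)
  have key: "X ^ (2 * nat k) * (X ^ (2 * nat (int N + 1 - k)) * G N (k - 1)) =
             X ^ (2 * nat (int N + 2 - k)) * (X ^ (2 * nat (k - 1)) * G N (k - 1))"
  proof (cases "G N (k - 1) = 0")
    case False
    then have "0 \<le> k - 1" "k - 1 \<le> int N" using G_nz by blast+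
    then have "nat k + nat (int N + 1 - k) = nat (int N + 2 - k) + nat (k - 1)" by linarith
    then have "2 * nat k + 2 * nat (int N + 1 - k) = 2 * nat (int N + 2 - k) + 2 * nat (k - 1)" by linarith
    then show ?thesis by (simp add: power_add[symmetric] mult.assoc[symmetric])
  qed simp
  have "G (Suc (Suc N)) k = G (Suc N) (k - 1) + X ^ (2 * nat k) * G (Suc N) k" by simp
  also have "\<dots> = (X ^ (2 * nat (int N + 2 - k)) * G N (k - 2) + G N (k - 1))
        + X ^ (2 * nat k) * (X ^ (2 * nat (int N + 1 - k)) * G N (k - 1) + G N k)"
    using Suc.IH[of "k - 1"] Suc.IH[of k] by (simp add: algebra_simps)
  also have "\<dots> = X ^ (2 * nat (int N + 2 - k)) * (G N (k - 2) + X ^ (2 * nat (k - 1)) * G N (k - 1))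
        + (G N (k - 1) + X ^ (2 * nat k) * G N k)"
    using key by (simp add: algebra_simps)
  also have "\<dots> = X ^ (2 * nat (int (Suc N) + 1 - k)) * G (Suc N) (k - 1) + G (Suc N) k"
    by (simp add: algebra_simps)
  finally show ?case .
qed

lemma G_3: "G (Suc (Suc N)) k = X ^ (2 * nat k) * G N k + (1 + X ^ (2 * (N + 1))) * G N (k - 1)
      + X ^ (2 * nat (int N + 2 - k)) * G N (k - 2)"
proof -
  have key: "X ^ (2 * nat k) * (X ^ (2 * nat (int N + 1 - k)) * G N (k - 1)) = X ^ (2 * (N + 1)) * G N (k - 1)"
  proof (cases "G N (k - 1) = 0")
    case False
    then have "0 \<le> k - 1" "k - 1 \<le> int N" using G_nz by blast+
    then have "nat k + nat (int N + 1 - k) = N + 1"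
      by (subst nat_add_distrib[symmetric]) auto
    then have "X ^ (2 * nat k) * X ^ (2 * nat (int N + 1 - k)) = (X::int fps) ^ (2 * (N + 1))"
      by (simp only: power_add[symmetric] add_mult_distrib2[symmetric])
    then show ?thesis by (simp add: mult.assoc[symmetric])
  qed simp
  have "G (Suc (Suc N)) k = G (Suc N) (k - 1) + X ^ (2 * nat k) * G (Suc N) k" by simp
  also have "\<dots> = (X ^ (2 * nat (int N + 2 - k)) * G N (k - 2) + G N (k - 1))
        + X ^ (2 * nat k) * (X ^ (2 * nat (int N + 1 - k)) * G N (k - 1) + G N k)"
    using G_P2[of N "k - 1"] G_P2[of N k] by (simp add: algebra_simps)
  also have "\<dots> = X ^ (2 * nat k) * G N k + (1 + X ^ (2 * (N + 1))) * G N (k - 1)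
      + X ^ (2 * nat (int N + 2 - k)) * G N (k - 2)"
    using key by (simp add: algebra_simps)
  finally show ?thesis .
qed

definition qp :: "nat \<Rightarrow> int fps" where "qp j = (\<Prod>i\<in>{1..j}. 1 - X ^ (2 * i))"

lemma qp_0[simp]: "qp 0 = 1" by (simp add: qp_def)
lemma qp_Suc: "qp (Suc j) = qp j * (1 - X ^ (2 * Suc j))" by (simp add: qp_def)

lemma G_prod: "0 \<le> k \<Longrightarrow> k \<le> int N \<Longrightarrow> G N k * qp (nat k) * qp (N - nat k) = qp N"
proof (induction N arbitrary: k)
  case 0
  then show ?case by simp
next
  case (Suc N)
  let ?Q = "\<lambda>e. (X::int fps) ^ (2 * e)"
  have A: "G N (k - 1) * qp (nat k) * qp (Suc N - nat k) = qp N * (1 - ?Q (nat k))"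
  proof (cases "k = 0")
    case True
    then show ?thesis by (simp add: G_out)
  next
    case False
    then have k1: "0 \<le> k - 1" "k - 1 \<le> int N" using Suc.prems by auto
    have "nat k = Suc (nat (k - 1))" using k1 by linarith
    moreover have "Suc N - nat k = N - nat (k - 1)" using k1 by linarith
    ultimately show ?thesis using Suc.IH[OF k1] by (simp add: qp_Suc algebra_simps)
  qed
  have B: "?Q (nat k) * G N k * qp (nat k) * qp (Suc N - nat k) = ?Q (nat k) * qp N * (1 - ?Q (Suc N - nat k))"
  proof (cases "k = int N + 1")
    case True
    then show ?thesis by (simp add: G_out)
  next
    case False
    then have k1: "0 \<le> k" "k \<le> int N" using Suc.prems by auto
    have "Suc N - nat k = Suc (N - nat k)" using k1 by linarith
    then have "?Q (nat k) * G N k * qp (nat k) * qp (Suc N - nat k) =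
        ?Q (nat k) * (G N k * qp (nat k) * qp (N - nat k)) * (1 - ?Q (Suc (N - nat k)))"
      by (simp add: qp_Suc mult_ac)
    also have "\<dots> = ?Q (nat k) * qp N * (1 - ?Q (Suc N - nat k))"
      using Suc.IH[OF k1] \<open>Suc N - nat k = Suc (N - nat k)\<close> by simp
    finally show ?thesis .
  qed
  have "nat k \<le> Suc N" using Suc.prems by linarith
  then have "2 * nat k + 2 * (Suc N - nat k) = 2 * Suc N" by simp
  then have e: "?Q (nat k) * ?Q (Suc N - nat k) = ?Q (Suc N)"
    by (simp only: power_add[symmetric])
  have "G (Suc N) k * qp (nat k) * qp (Suc N - nat k) =
        G N (k - 1) * qp (nat k) * qp (Suc N - nat k) + ?Q (nat k) * G N k * qp (nat k) * qp (Suc N - nat k)"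
    by (simp add: algebra_simps)
  also have "\<dots> = qp N * (1 - ?Q (Suc N))"
    unfolding A B e[symmetric] by (simp add: algebra_simps)
  also have "\<dots> = qp (Suc N)" by (simp add: qp_Suc)
  finally show ?case .
qed

lemma qp_approx: "j \<ge> m \<Longrightarrow> eqm m (qp j) (F 2)"
  unfolding qp_def using F_approx[of 2 m j] by simp

lemma F2_0: "fps_nth (F 2 :: int fps) 0 = 1" by (simp add: F_0)

lemma Glim:
  assumes "0 \<le> k" "k \<le> int N" "nat k \<ge> m" "N - nat k \<ge> m"
  shows "eqm m (G N k * F 2) 1"
proof -
  have "eqm m (G N k * qp (nat k) * qp (N - nat k)) (G N k * F 2 * F 2)"
    using qp_approx assms by (intro eqm_mult) auto
  then have "eqm m (qp N) (G N k * F 2 * F 2)" using G_prod assms by simp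
  moreover have "eqm m (qp N) (F 2)" using qp_approx assms by simp
  ultimately have "eqm m (F 2 * (G N k * F 2)) (F 2 * 1)"
    by (metis eqm_sym eqm_trans mult.commute mult.left_commute mult_1_right)
  then show ?thesis using eqm_cancel F2_0 by blast
qed

definition C :: "nat \<Rightarrow> int \<Rightarrow> int fps" where
  "C n k = X ^ nat ((k - int n) ^ 2) * G (2 * n) k"

lemma C_out: "k < 0 \<or> k > 2 * int n \<Longrightarrow> C n k = 0"
  unfolding C_def using G_out[of k "2 * n"] by auto

lemma Xpow_int: "int p = int q \<Longrightarrow> (X::int fps) ^ p = X ^ q" by simp

lemma C_rec: "C (Suc n) k = X ^ (2 * n + 1) * C n k + (1 + X ^ (2 * (2 * n + 1))) * C n (k - 1)
   + X ^ (2 * n + 1) * C n (k - 2)"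
proof -
  have g: "G (2 * Suc n) k = X ^ (2 * nat k) * G (2 * n) k + (1 + X ^ (2 * (2 * n + 1))) * G (2 * n) (k - 1)
      + X ^ (2 * nat (int (2 * n) + 2 - k)) * G (2 * n) (k - 2)"
    using G_3[of "2 * n" k] by simp
  have t1: "X ^ nat ((k - int (Suc n)) ^ 2) * (X ^ (2 * nat k) * G (2 * n) k) = X ^ (2 * n + 1) * C n k"
  proof (cases "G (2 * n) k = 0")
    case False
    then have k: "0 \<le> k" using G_nz by blast
    have "(X::int fps) ^ nat ((k - int (Suc n)) ^ 2) * X ^ (2 * nat k) = X ^ (2 * n + 1) * X ^ nat ((k - int n) ^ 2)"
    proof -
      have e1: "int (nat ((k - int (Suc n)) ^ 2)) = (k - int (Suc n)) ^ 2" by simp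
      have e2: "int (nat ((k - int n) ^ 2)) = (k - int n) ^ 2" by simp
      have e3: "int (nat k) = k" using k by simp
      show ?thesis unfolding power_add[symmetric]
        by (rule Xpow_int, unfold of_nat_add of_nat_mult e1 e2 e3) (simp add: algebra_simps power2_eq_square)
    qed
    then show ?thesis unfolding C_def by (simp add: mult.assoc[symmetric])
  qed (simp add: C_def)
  have t2: "X ^ nat ((k - int (Suc n)) ^ 2) * ((1 + X ^ (2 * (2 * n + 1))) * G (2 * n) (k - 1)) =
            (1 + X ^ (2 * (2 * n + 1))) * C n (k - 1)"
  proof -
    have e: "k - int (Suc n) = k - 1 - int n" by simp
    show ?thesis unfolding C_def e by (simp add: mult_ac)
  qed
  have t3: "X ^ nat ((k - int (Suc n)) ^ 2) * (X ^ (2 * nat (int (2 * n) + 2 - k)) * G (2 * n) (k - 2))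
      = X ^ (2 * n + 1) * C n (k - 2)"
  proof (cases "G (2 * n) (k - 2) = 0")
    case False
    then have k: "k - 2 \<le> int (2 * n)" using G_nz by blast
    have "(X::int fps) ^ nat ((k - int (Suc n)) ^ 2) * X ^ (2 * nat (int (2 * n) + 2 - k))
        = X ^ (2 * n + 1) * X ^ nat ((k - 2 - int n) ^ 2)"
    proof -
      have e1: "int (nat ((k - int (Suc n)) ^ 2)) = (k - int (Suc n)) ^ 2" by simp
      have e2: "int (nat ((k - 2 - int n) ^ 2)) = (k - 2 - int n) ^ 2" by simp
      have "0 \<le> 2 * int n + 2 - k" using k by linarith
      then have e3: "int (nat (2 * int n + 2 - k)) = 2 * int n + 2 - k" by (rule nat_0_le)
      show ?thesis unfolding power_add[symmetric]
        by (rule Xpow_int, unfold of_nat_add of_nat_mult) (use k e1 e2 e3 in \<open>simp add: algebra_simps power2_eq_square\<close>)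
    qed
    then show ?thesis unfolding C_def by (simp add: mult.assoc[symmetric])
  qed (simp add: C_def)
  have "C (Suc n) k = X ^ nat ((k - int (Suc n)) ^ 2) * G (2 * Suc n) k" by (simp add: C_def)
  also have "\<dots> = X ^ nat ((k - int (Suc n)) ^ 2) * (X ^ (2 * nat k) * G (2 * n) k)
      + X ^ nat ((k - int (Suc n)) ^ 2) * ((1 + X ^ (2 * (2 * n + 1))) * G (2 * n) (k - 1))
      + X ^ nat ((k - int (Suc n)) ^ 2) * (X ^ (2 * nat (int (2 * n) + 2 - k)) * G (2 * n) (k - 2))"
    unfolding g by (simp add: distrib_left)
  also have "\<dots> = X ^ (2 * n + 1) * C n k + (1 + X ^ (2 * (2 * n + 1))) * C n (k - 1)
   + X ^ (2 * n + 1) * C n (k - 2)" unfolding t1 t2 t3 ..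
  finally show ?thesis .
qed

lemma sum_shift:
  fixes h :: "int \<Rightarrow> 'a::comm_ring_1" and M d e :: nat
  assumes h: "\<And>k. k < 0 \<or> k > int M \<Longrightarrow> h k = 0"
  shows "(\<Sum>k\<in>{0..int M + int d + int e}. z ^ nat k * h (k - int d)) = z ^ d * (\<Sum>k\<in>{0..int M}. z ^ nat k * h k)"
proof -
  have "(\<Sum>k\<in>{0..int M + int d + int e}. z ^ nat k * h (k - int d)) = (\<Sum>k\<in>{int d..int M + int d}. z ^ nat k * h (k - int d))"
    by (rule sum.mono_neutral_right) (auto simp: h)
  also have "\<dots> = (\<Sum>j\<in>{0..int M}. z ^ nat (j + int d) * h j)"
    by (rule sum.reindex_bij_witness[of _ "\<lambda>j. j + int d" "\<lambda>k. k - int d"]) auto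
  also have "\<dots> = (\<Sum>j\<in>{0..int M}. z ^ d * (z ^ nat j * h j))"
  proof (rule sum.cong)
    fix j assume "j \<in> {0..int M}"
    then have "nat (j + int d) = d + nat j" by auto
    then show "z ^ nat (j + int d) * h j = z ^ d * (z ^ nat j * h j)" by (simp add: power_add mult_ac)
  qed simp
  also have "\<dots> = z ^ d * (\<Sum>k\<in>{0..int M}. z ^ nat k * h k)" by (simp add: sum_distrib_left)
  finally show ?thesis .
qed

theorem JTP_fin:
  "(\<Prod>j\<in>{1..n}. (z + X ^ (2 * j - 1)) * (1 + z * X ^ (2 * j - 1))) = (\<Sum>k\<in>{0..2 * int n}. z ^ nat k * C n k)"
proof (induction n)
  case 0
  then show ?case by (simp add: C_def)
next
  case (Suc n)
  let ?a = "(X::int fps) ^ (2 * n + 1)"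
  let ?S = "\<Sum>k\<in>{0..2 * int n}. z ^ nat k * C n k"
  have h: "\<And>k. k < 0 \<or> k > int (2 * n) \<Longrightarrow> C n k = 0" using C_out by simp
  have s0: "(\<Sum>k\<in>{0..2 * int (Suc n)}. z ^ nat k * C n k) = ?S"
    using sum_shift[where h="C n" and M="2 * n" and z=z and d=0 and e=2, OF h] by (simp add: algebra_simps)
  have s1: "(\<Sum>k\<in>{0..2 * int (Suc n)}. z ^ nat k * C n (k - 1)) = z * ?S"
    using sum_shift[where h="C n" and M="2 * n" and z=z and d=1 and e=1, OF h] by (simp add: algebra_simps)
  have s2: "(\<Sum>k\<in>{0..2 * int (Suc n)}. z ^ nat k * C n (k - 2)) = z ^ 2 * ?S"
    using sum_shift[where h="C n" and M="2 * n" and z=z and d=2 and e=0, OF h] by (simp add: algebra_simps)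
  let ?b = "(X::int fps) ^ (2 * (2 * n + 1))"
  let ?I = "{0..2 * int (Suc n)}"
  have "(\<Sum>k\<in>?I. z ^ nat k * C (Suc n) k) =
        (\<Sum>k\<in>?I. ?a * (z ^ nat k * C n k) + (1 + ?b) * (z ^ nat k * C n (k - 1)) + ?a * (z ^ nat k * C n (k - 2)))"
    by (rule sum.cong) (simp_all only: C_rec ring_distribs mult_ac)
  also have "\<dots> = ?a * (\<Sum>k\<in>?I. z ^ nat k * C n k) + (1 + ?b) * (\<Sum>k\<in>?I. z ^ nat k * C n (k - 1))
       + ?a * (\<Sum>k\<in>?I. z ^ nat k * C n (k - 2))"
    by (simp only: sum.distrib sum_distrib_left)
  also have "\<dots> = (?a + (1 + ?b) * z + ?a * z ^ 2) * ?S"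
    unfolding s0 s1 s2 by (simp add: algebra_simps)
  also have "?a + (1 + ?b) * z + ?a * z ^ 2 = (z + ?a) * (1 + z * ?a)"
  proof -
    have "?a * ?a = ?b" by (simp add: power_add[symmetric] mult_2)
    then show ?thesis by (simp add: algebra_simps power2_eq_square)
  qed
  finally have r: "(\<Sum>k\<in>{0..2 * int (Suc n)}. z ^ nat k * C (Suc n) k) = (z + ?a) * (1 + z * ?a) * ?S" .
  have "2 * Suc n - 1 = 2 * n + 1" by simp
  then show ?case using Suc.IH r by (simp add: mult_ac)
qed

lemma lim_sum:
  assumes n: "n \<ge> 2 * m + 3"
    and E: "\<And>k. \<bar>k - int n\<bar> > int m + 1 \<Longrightarrow> E k > m"
  shows "eqm m (\<Sum>k\<in>{0..2 * int n}. v k * X ^ E k * G (2 * n) k * F 2) (\<Sum>k\<in>{0..2 * int n}. v k * X ^ E k)"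
proof (rule eqm_sum)
  fix k assume k: "k \<in> {0..2 * int n}"
  show "eqm m (v k * X ^ E k * G (2 * n) k * F 2) (v k * X ^ E k)"
  proof (cases "\<bar>k - int n\<bar> > int m + 1")
    case True
    then have "E k > m" by (rule E)
    then have "eqm m (X ^ E k * (v k * G (2 * n) k * F 2)) 0" "eqm m (X ^ E k * v k) 0"
      by (simp_all add: eqm_X_power_0)
    then show ?thesis by (metis (no_types, lifting) eqm_sym eqm_trans mult.commute mult.left_commute)
  next
    case False
    then have "nat k \<ge> m" "2 * n - nat k \<ge> m" using n k by auto
    then have "eqm m (G (2 * n) k * F 2) 1" using k by (intro Glim) auto
    then have "eqm m (v k * X ^ E k * (G (2 * n) k * F 2)) (v k * X ^ E k * 1)"
      by (intro eqm_mult) auto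
    then show ?thesis by (simp add: mult.assoc)
  qed
qed

lemma big_sq:
  fixes s :: int
  assumes "\<bar>s\<bar> > int m + 1"
  shows "s ^ 2 > int m" "s ^ 2 + s > int m"
proof -
  let ?a = "\<bar>s\<bar>"
  have a: "?a \<ge> int m + 2" using assms by linarith
  have sq: "s ^ 2 = ?a * ?a" by (simp add: power2_eq_square abs_mult_self_eq)
  have "?a * (?a - 1) \<ge> ?a * 1" using a by (intro mult_left_mono) auto
  then have "?a * ?a - ?a \<ge> ?a" by (simp add: algebra_simps)
  moreover have "s \<ge> - ?a" by linarith
  ultimately show "s ^ 2 + s > int m" "s ^ 2 > int m" unfolding sq using a by linarith+
qed

lemma sqs_nonneg: "(s::int) ^ 2 + s \<ge> 0"
proof (cases "s \<ge> 0")
  case True then show ?thesis by simp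
next
  case False
  then have "s * (s + 1) \<ge> 0" by (intro mult_nonpos_nonpos) auto
  then show ?thesis by (simp add: power2_eq_square algebra_simps)
qed

definition SA :: "nat \<Rightarrow> int fps" where "SA t = (\<Sum>u\<in>{- int t..int t}. X ^ nat (u ^ 2))"
definition SB :: "nat \<Rightarrow> int fps" where "SB t = (\<Sum>u\<in>{- int t..int t}. X ^ nat (u ^ 2 + u))"
definition SB' :: "nat \<Rightarrow> int fps" where "SB' t = (\<Sum>u\<in>{- int t..int t - 1}. X ^ nat (u ^ 2 + u))"

definition LoN :: "nat \<Rightarrow> int fps" where "LoN n = (\<Prod>j\<in>{1..n}. 1 - X ^ (2 * j - 1))"
definition HoN :: "nat \<Rightarrow> int fps" where "HoN n = (\<Prod>j\<in>{1..n}. 1 + X ^ (2 * j - 1))"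
definition HeN :: "nat \<Rightarrow> int fps" where "HeN n = (\<Prod>j\<in>{1..n}. 1 + X ^ (2 * j))"

lemma reindex_center:
  "(\<Sum>k\<in>{0..2 * int n}. g k) = (\<Sum>u\<in>{- int n..int n}. g (u + int n))"
  by (rule sum.reindex_bij_witness[of _ "\<lambda>u. u + int n" "\<lambda>k. k - int n"]) auto

lemma JB: assumes "t \<ge> 2 * m + 3" shows "eqm m (HoN t ^ 2 * F 2) (SA t)"
proof -
  have "HoN t ^ 2 = (\<Sum>k\<in>{0..2 * int t}. 1 ^ nat k * C t k)"
    unfolding JTP_fin[symmetric] HoN_def by (simp add: power2_eq_square prod.distrib)
  then have "HoN t ^ 2 * F 2 = (\<Sum>k\<in>{0..2 * int t}. 1 * X ^ nat ((k - int t) ^ 2) * G (2 * t) k * F 2)"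
    by (simp add: C_def sum_distrib_right mult.assoc)
  moreover have "eqm m (\<Sum>k\<in>{0..2 * int t}. 1 * X ^ nat ((k - int t) ^ 2) * G (2 * t) k * F 2)
      (\<Sum>k\<in>{0..2 * int t}. 1 * X ^ nat ((k - int t) ^ 2))"
    using assms by (rule lim_sum) (use big_sq in \<open>force\<close>)
  moreover have "(\<Sum>k\<in>{0..2 * int t}. 1 * (X::int fps) ^ nat ((k - int t) ^ 2)) = SA t"
    unfolding SA_def reindex_center by simp
  ultimately show ?thesis by simp
qed

lemma sub4_eqm: "eqm m f g \<Longrightarrow> eqm m (sub2 (sub2 f)) (sub2 (sub2 g))"
  by (rule eqm_mono[OF sub2_eqm[OF sub2_eqm]]) auto

lemma JC: assumes t: "t \<ge> 2 * m + 3" shows "eqm m (2 * HeN (t - 1) * HeN t * F 2) (SB t)"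
proof -
  obtain t' where t': "t = Suc t'" using t by (cases t) auto
  have f1: "(X + X ^ (2 * j - 1)) * (1 + X * X ^ (2 * j - 1)) = X * ((1 + X ^ (2 * (j - 1))) * (1 + (X::int fps) ^ (2 * j)))"
    if "j \<in> {1..t}" for j
  proof -
    have "2 * j - 1 = Suc (2 * (j - 1))" "2 * j = Suc (2 * j - 1)" using that by auto
    then have "(X::int fps) ^ (2 * j - 1) = X * X ^ (2 * (j - 1))" "(X::int fps) ^ (2 * j) = X * X ^ (2 * j - 1)"
      by (metis power_Suc)+
    then show ?thesis by (simp add: algebra_simps)
  qed
  have p1: "(\<Prod>j\<in>{1..t}. 1 + (X::int fps) ^ (2 * (j - 1))) = 2 * HeN (t - 1)"
  proof -
    have "(\<Prod>j\<in>{1..t}. 1 + (X::int fps) ^ (2 * (j - 1))) = (\<Prod>i\<in>{0..t'}. 1 + (X::int fps) ^ (2 * i))"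
      unfolding t' using prod.atLeast_Suc_atMost_Suc_shift[of "\<lambda>j. 1 + (X::int fps) ^ (2 * (j - 1))" 0 t']
      by (simp add: comp_def)
    also have "\<dots> = 2 * (\<Prod>i\<in>{1..t'}. 1 + (X::int fps) ^ (2 * i))"
      by (simp add: prod.atLeast_Suc_atMost)
    finally show ?thesis by (simp add: HeN_def t')
  qed
  have lhs: "(\<Prod>j\<in>{1..t}. (X + X ^ (2 * j - 1)) * (1 + X * X ^ (2 * j - 1))) = X ^ t * (2 * HeN (t - 1) * HeN t)"
  proof -
    have "(\<Prod>j\<in>{1..t}. (X + X ^ (2 * j - 1)) * (1 + X * X ^ (2 * j - 1))) =
          (\<Prod>j\<in>{1..t}. X * ((1 + X ^ (2 * (j - 1))) * (1 + (X::int fps) ^ (2 * j))))"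
      by (rule prod.cong[OF refl f1])
    also have "\<dots> = X ^ t * ((\<Prod>j\<in>{1..t}. 1 + X ^ (2 * (j - 1))) * (\<Prod>j\<in>{1..t}. 1 + (X::int fps) ^ (2 * j)))"
      by (simp only: prod.distrib) simp
    also have "\<dots> = X ^ t * (2 * HeN (t - 1) * HeN t)"
      by (simp only: p1) (simp add: HeN_def)
    finally show ?thesis .
  qed
  have rhs: "(\<Sum>k\<in>{0..2 * int t}. X ^ nat k * C t k) = X ^ t * (\<Sum>k\<in>{0..2 * int t}. X ^ nat ((k - int t) ^ 2 + (k - int t)) * G (2 * t) k)"
    unfolding sum_distrib_left
  proof (rule sum.cong)
    fix k assume k: "k \<in> {0..2 * int t}"
    have e1: "int (nat ((k - int t) ^ 2)) = (k - int t) ^ 2" by simp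
    have e2: "int (nat ((k - int t) ^ 2 + (k - int t))) = (k - int t) ^ 2 + (k - int t)"
      using sqs_nonneg[of "k - int t"] by simp
    have e3: "int (nat k) = k" using k by simp
    have "(X::int fps) ^ nat k * X ^ nat ((k - int t) ^ 2) = X ^ t * X ^ nat ((k - int t) ^ 2 + (k - int t))"
      unfolding power_add[symmetric]
      by (rule Xpow_int, unfold of_nat_add) (use e1 e2 e3 in \<open>simp add: algebra_simps power2_eq_square\<close>)
    then show "X ^ nat k * C t k = X ^ t * (X ^ nat ((k - int t) ^ 2 + (k - int t)) * G (2 * t) k)"
      unfolding C_def by (simp add: mult.assoc[symmetric])
  qed simp
  have "X ^ t * (2 * HeN (t - 1) * HeN t) = X ^ t * (\<Sum>k\<in>{0..2 * int t}. X ^ nat ((k - int t) ^ 2 + (k - int t)) * G (2 * t) k)"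
    using JTP_fin[of X t] lhs rhs by simp
  then have e: "2 * HeN (t - 1) * HeN t = (\<Sum>k\<in>{0..2 * int t}. X ^ nat ((k - int t) ^ 2 + (k - int t)) * G (2 * t) k)"
    by simp
  have "eqm m (\<Sum>k\<in>{0..2 * int t}. 1 * X ^ nat ((k - int t) ^ 2 + (k - int t)) * G (2 * t) k * F 2)
      (\<Sum>k\<in>{0..2 * int t}. 1 * X ^ nat ((k - int t) ^ 2 + (k - int t)))"
    using t by (rule lim_sum) (use big_sq in \<open>force\<close>)
  moreover have "(\<Sum>k\<in>{0..2 * int t}. 1 * (X::int fps) ^ nat ((k - int t) ^ 2 + (k - int t))) = SB t"
    unfolding SB_def reindex_center by simp
  ultimately show ?thesis unfolding e by (simp add: sum_distrib_right)
qed

lemma sign_even: "0 \<le> u + int t \<Longrightarrow> (-1::int fps) ^ nat (2 * u + 2 * int t) = 1"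
proof -
  assume "0 \<le> u + int t"
  then have "nat (2 * u + 2 * int t) = 2 * nat (u + int t)" by linarith
  then show ?thesis by (simp add: power_mult)
qed

lemma sign_odd: "0 \<le> u + int t \<Longrightarrow> (-1::int fps) ^ nat (2 * u + 1 + 2 * int t) = -1"
proof -
  assume "0 \<le> u + int t"
  then have "nat (2 * u + 1 + 2 * int t) = Suc (2 * nat (u + int t))" by linarith
  then show ?thesis by (simp add: power_mult)
qed

lemma two_ne: "2 * (x::int) \<noteq> 2 * u + 1" by presburger

lemma split_set: "{- (2 * int t)..2 * int t} = (\<lambda>u. 2 * u) ` {- int t..int t} \<union> (\<lambda>u. 2 * u + 1) ` {- int t..int t - 1}"
proof
  show "{- (2 * int t)..2 * int t} \<subseteq> (\<lambda>u. 2 * u) ` {- int t..int t} \<union> (\<lambda>u. 2 * u + 1) ` {- int t..int t - 1}"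
  proof
    fix s assume s: "s \<in> {- (2 * int t)..2 * int t}"
    show "s \<in> (\<lambda>u. 2 * u) ` {- int t..int t} \<union> (\<lambda>u. 2 * u + 1) ` {- int t..int t - 1}"
    proof (cases "even s")
      case True
      then obtain u where "s = 2 * u" by (rule evenE)
      then show ?thesis using s by auto
    next
      case False
      then obtain u where "s = 2 * u + 1" by (rule oddE)
      then show ?thesis using s by auto
    qed
  qed
qed auto

lemma JA_split:
  "(\<Sum>k\<in>{0..2 * int (2 * t)}. (-1) ^ nat k * X ^ nat ((k - int (2 * t)) ^ 2))
   = sub2 (sub2 (SA t)) - X * sub2 (sub2 (SB' t))"
proof -
  have "(\<Sum>k\<in>{0..2 * int (2 * t)}. (-1) ^ nat k * (X::int fps) ^ nat ((k - int (2 * t)) ^ 2))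
      = (\<Sum>s\<in>{- (2 * int t)..2 * int t}. (-1) ^ nat (s + 2 * int t) * X ^ nat (s ^ 2))"
    unfolding reindex_center by simp
  also have "\<dots> = (\<Sum>s\<in>(\<lambda>u. 2 * u) ` {- int t..int t}. (-1) ^ nat (s + 2 * int t) * X ^ nat (s ^ 2))
     + (\<Sum>s\<in>(\<lambda>u. 2 * u + 1) ` {- int t..int t - 1}. (-1) ^ nat (s + 2 * int t) * X ^ nat (s ^ 2))"
    unfolding split_set by (rule sum.union_disjoint) (auto simp: two_ne)
  also have "(\<Sum>s\<in>(\<lambda>u. 2 * u) ` {- int t..int t}. (-1) ^ nat (s + 2 * int t) * (X::int fps) ^ nat (s ^ 2))
      = (\<Sum>u\<in>{- int t..int t}. sub2 (sub2 (X ^ nat (u ^ 2))))"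
  proof -
    have "(\<Sum>s\<in>(\<lambda>u. 2 * u) ` {- int t..int t}. (-1) ^ nat (s + 2 * int t) * (X::int fps) ^ nat (s ^ 2))
        = (\<Sum>u\<in>{- int t..int t}. (-1) ^ nat (2 * u + 2 * int t) * (X::int fps) ^ nat ((2 * u) ^ 2))"
      by (rule sum.reindex_cong[of "\<lambda>u. 2 * u"]) (auto simp: inj_on_def)
    also have "\<dots> = (\<Sum>u\<in>{- int t..int t}. sub2 (sub2 (X ^ nat (u ^ 2))))"
    proof (rule sum.cong)
      fix u assume u: "u \<in> {- int t..int t}"
      have "nat ((2 * u) ^ 2) = 2 * (2 * nat (u ^ 2))" by (simp add: power_mult_distrib nat_mult_distrib)
      then show "(-1) ^ nat (2 * u + 2 * int t) * (X::int fps) ^ nat ((2 * u) ^ 2) = sub2 (sub2 (X ^ nat (u ^ 2)))"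
        using u by (simp add: sign_even sub2_Xp)
    qed simp
    finally show ?thesis .
  qed
  also have "(\<Sum>s\<in>(\<lambda>u. 2 * u + 1) ` {- int t..int t - 1}. (-1) ^ nat (s + 2 * int t) * (X::int fps) ^ nat (s ^ 2))
      = - (\<Sum>u\<in>{- int t..int t - 1}. X * sub2 (sub2 (X ^ nat (u ^ 2 + u))))"
  proof -
    have "(\<Sum>s\<in>(\<lambda>u. 2 * u + 1) ` {- int t..int t - 1}. (-1) ^ nat (s + 2 * int t) * (X::int fps) ^ nat (s ^ 2))
        = (\<Sum>u\<in>{- int t..int t - 1}. (-1) ^ nat (2 * u + 1 + 2 * int t) * (X::int fps) ^ nat ((2 * u + 1) ^ 2))"
      by (rule sum.reindex_cong[of "\<lambda>u. 2 * u + 1"]) (auto simp: inj_on_def)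
    also have "\<dots> = (\<Sum>u\<in>{- int t..int t - 1}. - (X * sub2 (sub2 (X ^ nat (u ^ 2 + u)))))"
    proof (rule sum.cong)
      fix u assume u: "u \<in> {- int t..int t - 1}"
      have "(2 * u + 1) ^ 2 = 1 + 4 * (u ^ 2 + u)" by (simp add: power2_eq_square algebra_simps)
      then have "int (nat ((2 * u + 1) ^ 2)) = int (Suc (2 * (2 * nat (u ^ 2 + u))))"
        using sqs_nonneg[of u] by simp
      then have "nat ((2 * u + 1) ^ 2) = Suc (2 * (2 * nat (u ^ 2 + u)))"
        by (simp only: of_nat_eq_iff)
      then show "(-1) ^ nat (2 * u + 1 + 2 * int t) * (X::int fps) ^ nat ((2 * u + 1) ^ 2) = - (X * sub2 (sub2 (X ^ nat (u ^ 2 + u))))"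
        using u by (simp add: sign_odd sub2_Xp)
    qed simp
    finally show ?thesis by (simp add: sum_negf)
  qed
  finally show ?thesis
    by (simp add: SA_def SB'_def sub2_sum sum_distrib_left)
qed

lemma JA: assumes t: "t \<ge> m + 2" shows "eqm m (LoN (2 * t) ^ 2 * F 2) (sub2 (sub2 (SA t)) - X * sub2 (sub2 (SB' t)))"
proof -
  have f1: "(-1 + X ^ (2 * j - 1)) * (1 + -1 * X ^ (2 * j - 1)) = -1 * (1 - (X::int fps) ^ (2 * j - 1)) ^ 2" for j
    by (simp add: algebra_simps power2_eq_square)
  have "LoN (2 * t) ^ 2 = (\<Sum>k\<in>{0..2 * int (2 * t)}. (-1) ^ nat k * C (2 * t) k)"
    unfolding JTP_fin[symmetric] f1 prod.distrib LoN_def by (simp add: prod_power_distrib power_mult)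
  then have "LoN (2 * t) ^ 2 * F 2 = (\<Sum>k\<in>{0..2 * int (2 * t)}. (-1) ^ nat k * X ^ nat ((k - int (2 * t)) ^ 2) * G (2 * (2 * t)) k * F 2)"
    by (simp add: C_def sum_distrib_right mult.assoc)
  moreover have "eqm m (\<Sum>k\<in>{0..2 * int (2 * t)}. (-1) ^ nat k * X ^ nat ((k - int (2 * t)) ^ 2) * G (2 * (2 * t)) k * F 2)
      (\<Sum>k\<in>{0..2 * int (2 * t)}. (-1) ^ nat k * X ^ nat ((k - int (2 * t)) ^ 2))"
    using t by (intro lim_sum) (use big_sq in \<open>force+\<close>)
  ultimately show ?thesis using JA_split by simp
qed

lemma SB_SB': assumes "t \<ge> m + 1" shows "eqm m (SB t) (SB' t)"
proof -
  have "{- int t..int t} = insert (int t) {- int t..int t - 1}" by auto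
  then have "SB t = X ^ nat (int t ^ 2 + int t) * 1 + SB' t"
    unfolding SB_def SB'_def by simp
  moreover have "eqm m (X ^ nat (int t ^ 2 + int t) * 1) (0::int fps)"
  proof (rule eqm_X_power_0)
    have "int t * int t \<ge> int t * 1" using assms by (intro mult_left_mono) auto
    then have "int m < int t * int t + int t" using assms by linarith
    then have "int m < int t ^ 2 + int t" by (simp add: power2_eq_square)
    then show "m < nat (int t ^ 2 + int t)" by (simp add: zless_nat_eq_int_zless)
  qed
  ultimately show ?thesis by (metis add_0 eqm_add eqm_refl eqm_sym)
qed

lemma prod_split:
  fixes f :: "nat \<Rightarrow> 'a::comm_monoid_mult" and n :: nat
  shows "(\<Prod>j\<in>{1..n}. f (2 * j - 1)) * (\<Prod>j\<in>{1..n}. f (2 * j)) = (\<Prod>j\<in>{1..2 * n}. f j)"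
proof (induction n)
  case (Suc n)
  have "2 * Suc n - 1 = Suc (2 * n)" "2 * Suc n = Suc (Suc (2 * n))" by auto
  then show ?case using Suc by (simp add: mult_ac)
qed simp

lemma LoF: "(Lo::int fps) * F 2 = F 1"
proof (rule eqm_all)
  fix m :: nat
  have "eqm m (Lo * F 2) (LoN m * (\<Prod>j\<in>{1..m}. 1 - X ^ (2 * j)))"
    using Lo_approx[of m m] F_approx[of 2 m m] unfolding LoN_def by (intro eqm_mult) (auto intro: eqm_sym)
  also have "LoN m * (\<Prod>j\<in>{1..m}. 1 - X ^ (2 * j)) = (\<Prod>j\<in>{1..2 * m}. 1 - X ^ j)"
    unfolding LoN_def using prod_split[of "\<lambda>j. 1 - (X::int fps) ^ j" m] by simp
  finally have c: "eqm m ((Lo::int fps) * F 2) (\<Prod>j\<in>{1..2 * m}. 1 - X ^ j)" .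
  have d: "eqm m (\<Prod>j\<in>{1..2 * m}. 1 - X ^ j) (F 1 :: int fps)"
    using F_approx[where 'a=int, of 1 m "2 * m"] by simp
  show "eqm m ((Lo::int fps) * F 2) (F 1)" by (rule eqm_trans[OF c d])
qed

lemma HoHeF: "(Ho::int fps) * He * F 1 = F 2"
proof (rule eqm_all)
  fix m :: nat
  have "eqm m (Ho * He * F 1) (HoN m * HeN m * (\<Prod>j\<in>{1..2 * m}. 1 - X ^ (1 * j)))"
    using Ho_approx[of m m] He_approx[of m m] F_approx[of 1 m "2 * m"] unfolding HoN_def HeN_def
    by (intro eqm_mult) (auto intro: eqm_sym)
  also have "HoN m * HeN m * (\<Prod>j\<in>{1..2 * m}. 1 - X ^ (1 * j)) = (\<Prod>j\<in>{1..2 * m}. 1 - X ^ (2 * j))"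
  proof -
    have "HoN m * HeN m = (\<Prod>j\<in>{1..2 * m}. 1 + (X::int fps) ^ j)"
      unfolding HoN_def HeN_def using prod_split[of "\<lambda>j. 1 + (X::int fps) ^ j" m] by simp
    moreover have "(1 + (X::int fps) ^ j) * (1 - X ^ (1 * j)) = 1 - X ^ (2 * j)" for j
      by (simp add: algebra_simps power_add[symmetric] mult_2)
    ultimately show ?thesis by (simp add: prod.distrib[symmetric])
  qed
  finally have c: "eqm m ((Ho::int fps) * He * F 1) (\<Prod>j\<in>{1..2 * m}. 1 - X ^ (2 * j))" .
  have d: "eqm m (\<Prod>j\<in>{1..2 * m}. 1 - X ^ (2 * j)) (F 2 :: int fps)"
    using F_approx[where 'a=int, of 2 m "2 * m"] by simp
  show "eqm m ((Ho::int fps) * He * F 1) (F 2)" by (rule eqm_trans[OF c d])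
qed

theorem K_identity:
  "(Lo::int fps) ^ 2 * F 2 = sub2 (sub2 (Ho ^ 2 * F 2)) - X * sub2 (sub2 (2 * He ^ 2 * F 2))"
proof (rule eqm_all)
  fix m :: nat
  define t where "t = 2 * m + 3"
  have t1: "t \<ge> m + 2" "t \<ge> 2 * m + 3" "t - 1 \<ge> m" "t \<ge> m + 1" by (auto simp: t_def)
  have a: "eqm m (Lo ^ 2 * F 2) (LoN (2 * t) ^ 2 * F 2)"
    using Lo_approx[of m "2 * t"] t1 unfolding LoN_def by (intro eqm_mult eqm_power) (auto intro: eqm_sym)
  have b: "eqm m (Ho ^ 2 * F 2) (SA t)"
  proof -
    have "eqm m (Ho ^ 2 * F 2) (HoN t ^ 2 * F 2)"
      using Ho_approx[of m t] t1 unfolding HoN_def by (intro eqm_mult eqm_power) (auto intro: eqm_sym)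
    then show ?thesis using JB[OF t1(2)] eqm_trans by blast
  qed
  have c: "eqm m (2 * He ^ 2 * F 2) (SB' t)"
  proof -
    have "eqm m (2 * He ^ 2 * F 2) (2 * (HeN (t - 1) * HeN t) * F 2)"
      using He_approx[of m t] He_approx[of m "t - 1"] t1 unfolding HeN_def power2_eq_square
      by (intro eqm_mult) (auto intro: eqm_sym)
    then have "eqm m (2 * He ^ 2 * F 2) (SB t)" using JC[OF t1(2)] eqm_trans by (simp add: mult.assoc)
    then show ?thesis using SB_SB'[OF t1(4)] eqm_trans by blast
  qed
  have "eqm m (Lo ^ 2 * F 2) (sub2 (sub2 (SA t)) - X * sub2 (sub2 (SB' t)))"
    using a JA[OF t1(1)] eqm_trans by blast
  moreover have "eqm m (sub2 (sub2 (SA t)) - X * sub2 (sub2 (SB' t)))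
       (sub2 (sub2 (Ho ^ 2 * F 2)) - X * sub2 (sub2 (2 * He ^ 2 * F 2)))"
    using b c by (intro eqm_diff eqm_mult sub4_eqm) (auto intro: eqm_sym)
  ultimately show "eqm m (Lo ^ 2 * F 2) (sub2 (sub2 (Ho ^ 2 * F 2)) - X * sub2 (sub2 (2 * He ^ 2 * F 2)))"
    using eqm_trans by blast
qed

lemma M3_extract:
  assumes "M3 (sub2 a + X * sub2 u) = M3 (sub2 c + X * sub2 v)"
  shows "M3 u = M3 v"
proof (rule fps_ext)
  fix n
  have "fps_nth (M3 (sub2 a + X * sub2 u)) (2 * n + 1) = fps_nth (M3 (sub2 c + X * sub2 v)) (2 * n + 1)"
    using assms by simp
  then show "fps_nth (M3 u) n = fps_nth (M3 v) n" by (simp only: M3_nth odd_coeff)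
qed

lemma cancel3:
  fixes f g h :: "3 fps"
  assumes "fps_nth f 0 = 1" "f * g = f * h"
  shows "g = h"
  using cancel_fps assms by blast

abbreviation f3 :: "nat \<Rightarrow> 3 fps" where "f3 r \<equiv> M3 (F r)"

lemma f3_0: "r \<ge> 1 \<Longrightarrow> fps_nth (f3 r) 0 = 1" by (rule M3_F0)

theorem main_fps: "M3 (od (BB 2 3 8)) = M3 (- 4 * BB 1 2 3)"
proof -
  define B2 where "B2 = BB 2 3 8"
  define B1 where "B1 = BB 1 2 3"
  define Th :: "int fps" where "Th = Ho ^ 2 * F 2"
  define La :: "int fps" where "La = 2 * He ^ 2 * F 2"
  define Ph :: "int fps" where "Ph = Lo ^ 2 * F 2"
  have cp1: "coprime (3::nat) 8" by (simp add: coprime_iff_gcd_eq_1 gcd_non_0_nat)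
  have cp2: "coprime (2::nat) 3" by (simp add: coprime_iff_gcd_eq_1 gcd_non_0_nat)
  have E1: "B2 * F 1 ^ 2 * F 24 ^ 2 = F 3 ^ 2 * F 8 ^ 2"
    using BB_identity[of 3 8 2] cp1 unfolding B2_def by simp
  have E2: "B1 * F 1 * F 6 = F 2 * F 3"
    using BB_identity[of 2 3 1] cp2 unfolding B1_def by simp
  have a: "(F 1 :: int fps) ^ 2 = F 2 * Ph"
    unfolding Ph_def LoF[symmetric] by (simp add: power2_eq_square mult_ac)
  have b: "Th * La * F 1 ^ 2 = 2 * (F 2 :: int fps) ^ 4"
  proof -
    have "Th * La * F 1 ^ 2 = 2 * F 2 ^ 2 * ((Ho::int fps) * He * F 1) ^ 2"
      unfolding Th_def La_def by (simp add: power2_eq_square mult_ac)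
    also have "\<dots> = 2 * F 2 ^ 4" unfolding HoHeF by (simp add: power_add[symmetric])
    finally show ?thesis .
  qed
  have c: "Ph = sub2 (sub2 Th) - X * sub2 (sub2 La)"
    unfolding Ph_def Th_def La_def by (rule K_identity)
  have s1: "F 2 = sub2 (F 1)" "F 4 = sub2 (F 2)" "F 8 = sub2 (F 4)"
    using sub2_F[of 1] sub2_F[of 2] sub2_F[of 4] by simp_all
  have F14: "F 1 ^ 4 = sub2 (F 1 ^ 2 * (sub2 Th ^ 2 + X * sub2 La ^ 2)) + X * sub2 (- 2 * F 1 ^ 2 * sub2 (Th * La))"
  proof -
    have "(F 1 :: int fps) ^ 4 = (F 1 ^ 2) ^ 2" by simp
    also have "\<dots> = sub2 (F 1) ^ 2 * (sub2 (sub2 Th) - X * sub2 (sub2 La)) ^ 2"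
      unfolding a c s1(1) by (simp add: power_mult_distrib)
    also have "\<dots> = sub2 (F 1 ^ 2 * (sub2 Th ^ 2 + X * sub2 La ^ 2)) + X * sub2 (- 2 * F 1 ^ 2 * sub2 (Th * La))"
      by (simp only: sub2_mult sub2_add sub2_power sub2_X sub2_numeral sub2_neg sub2_diff) algebra
    finally show ?thesis .
  qed
  have B2dec: "B2 * F 8 ^ 4 = sub2 (ev B2 * F 4 ^ 4) + X * sub2 (od B2 * F 4 ^ 4)"
  proof -
    have "B2 * F 8 ^ 4 = (sub2 (ev B2) + X * sub2 (od B2)) * sub2 (F 4) ^ 4"
      using ev_od[of B2] s1(3) by simp
    then show ?thesis by (simp add: sub2_mult sub2_power algebra_simps)
  qed
  have m1: "M3 (B2 * F 8 ^ 4) = M3 (F 1 ^ 4)"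
  proof -
    have "M3 B2 * f3 1 ^ 2 * f3 24 ^ 2 = f3 3 ^ 2 * f3 8 ^ 2"
      using arg_cong[OF E1, of M3] by (simp add: M3_mult M3_power)
    moreover have "f3 3 = f3 1 ^ 3" "f3 24 = f3 8 ^ 3"
      using frob_F[of 1] frob_F[of 8] by simp_all
    ultimately have "(f3 1 ^ 2 * f3 8 ^ 2) * (M3 B2 * f3 8 ^ 4) = (f3 1 ^ 2 * f3 8 ^ 2) * f3 1 ^ 4"
      by (simp add: algebra_simps power_mult_distrib flip: power_mult power_add)
    then have "M3 B2 * f3 8 ^ 4 = f3 1 ^ 4"
      by (rule cancel3[rotated]) (simp add: f3_0 fps_power_zeroth)
    then show ?thesis by (simp add: M3_mult M3_power)
  qed
  have m2: "M3 (od B2 * F 4 ^ 4) = M3 (- 2 * F 1 ^ 2 * sub2 (Th * La))"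
    using m1 unfolding B2dec F14 by (rule M3_extract)
  have e3: "sub2 (Th * La) * F 2 ^ 2 = 2 * F 4 ^ 4"
  proof -
    have "sub2 (Th * La) * F 2 ^ 2 = sub2 (Th * La * F 1 ^ 2)" by (simp add: sub2_mult sub2_power s1)
    also have "\<dots> = 2 * F 4 ^ 4" unfolding b by (simp add: sub2_mult sub2_power sub2_numeral s1)
    finally show ?thesis .
  qed
  have m3: "M3 (od B2) * M3 (F 2 ^ 2) = M3 (- 4 * F 1 ^ 2)"
  proof -
    have "M3 (F 4 ^ 4) * (M3 (od B2) * M3 (F 2 ^ 2)) = M3 (od B2 * F 4 ^ 4) * M3 (F 2 ^ 2)"
      by (simp add: M3_mult mult_ac)
    also have "\<dots> = M3 (- 2 * F 1 ^ 2 * (sub2 (Th * La) * F 2 ^ 2))"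
      unfolding m2 M3_mult[symmetric] by (simp add: mult_ac)
    also have "\<dots> = M3 (F 4 ^ 4) * M3 (- 4 * F 1 ^ 2)"
      unfolding e3 by (simp add: M3_mult mult_ac M3_neg M3_numeral)
    finally show ?thesis
      by (rule cancel3[rotated]) (simp add: M3_power f3_0 fps_power_zeroth)
  qed
  have m4: "M3 B1 * M3 (F 2 ^ 2) = M3 (F 1 ^ 2)"
  proof -
    have "M3 B1 * f3 1 * f3 6 = f3 2 * f3 3"
      using arg_cong[OF E2, of M3] by (simp add: M3_mult)
    moreover have "f3 3 = f3 1 ^ 3" "f3 6 = f3 2 ^ 3"
      using frob_F[of 1] frob_F[of 2] by simp_all
    ultimately have "(f3 1 * f3 2) * (M3 B1 * f3 2 ^ 2) = (f3 1 * f3 2) * f3 1 ^ 2"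
      by (simp add: algebra_simps power_mult_distrib power2_eq_square power3_eq_cube)
    then have "M3 B1 * f3 2 ^ 2 = f3 1 ^ 2"
      by (rule cancel3[rotated]) (simp add: f3_0 fps_power_zeroth)
    then show ?thesis by (simp add: M3_power)
  qed
  have "M3 (F 2 ^ 2) * M3 (od B2) = M3 (- 4 * F 1 ^ 2)" using m3 by (simp add: mult.commute)
  also have "\<dots> = - 4 * M3 (F 1 ^ 2)" by (simp add: M3_mult M3_neg M3_numeral)
  also have "\<dots> = - 4 * (M3 B1 * M3 (F 2 ^ 2))" by (simp only: m4)
  also have "\<dots> = M3 (F 2 ^ 2) * M3 (- 4 * B1)" by (simp add: M3_mult M3_neg M3_numeral mult_ac)
  finally have "M3 (F 2 ^ 2) * M3 (od B2) = M3 (F 2 ^ 2) * M3 (- 4 * B1)" .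
  then have "M3 (od B2) = M3 (- 4 * B1)"
    by (rule cancel3[rotated]) (simp add: M3_power f3_0 fps_power_zeroth)
  then show ?thesis unfolding B1_def B2_def .
qed

theorem main_cong: "[b 2 3 8 (2 * n + 1) = 2 * b 1 2 3 n] (mod 3)"
proof -
  have "fps_nth (M3 (od (BB 2 3 8))) n = fps_nth (M3 (- 4 * BB 1 2 3)) n"
    using main_fps by simp
  then have "(of_int (int (b 2 3 8 (2 * n + 1))) :: 3) = of_int (- 4 * int (b 1 2 3 n))"
    by (simp add: M3_nth od_def BB_def numeral_fps_const)
  then have "[int (b 2 3 8 (2 * n + 1)) = - 4 * int (b 1 2 3 n)] (mod int CHAR(3))"
    by (simp only: of_int_eq_iff_cong_CHAR)
  then have "int (b 2 3 8 (2 * n + 1)) mod 3 = (- 4 * int (b 1 2 3 n)) mod 3"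
    by (simp add: cong_def)
  then have "int (b 2 3 8 (2 * n + 1)) mod 3 = (2 * int (b 1 2 3 n)) mod 3"
    by presburger
  then have "int (b 2 3 8 (2 * n + 1) mod 3) = int ((2 * b 1 2 3 n) mod 3)"
    by (simp add: of_nat_mod)
  then show ?thesis by (simp add: cong_def)
qed

theorem mainTheorem6:
  fixes n :: nat
  assumes "n \<ge> 1"
  shows "[b 2 3 8 (2 * n + 1) = 2 * b 1 2 3 n] (mod 3)"
  by (rule main_cong)

end
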